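(* Let $M'\in\mathbb{R}^{n\times m}$ and let $\mathcal{M}\subseteq\mathcal{Q}(M')$ be such that for every $M\in\mathcal{M}$ the DSR graph $G_{M,M^t}$ is steady. Then for any $A,B^t\in\overline{\mathcal{M}}$ (the closure of $\mathcal{M}$), the matrix $AB$ is a $P_0$-matrix.
   Context: For $M\in\mathbb{R}^{n\times m}$, the qualitative class $\mathcal{Q}(M)$ is the set of real $n\times m$ matrices with the same entrywise sign pattern (signs in $\{-,0,+\}$) as $M$. A square real matrix is a $P_0$-matrix if all principal minors are nonnegative. DSR graphs: for $A\in\mathbb{R}^{n\times m}$, $B\in\mathbb{R}^{m\times n}$, $G_{A,B}$ is the signed, labelled bipartite digraph with S-vertices $S_1,\dots,S_n$ and R-vertices $R_1,\dots,R_m$, with an arc $R_j\to S_i$ of sign $\mathrm{sign}(A_{ij})$ iff $A_{ij}\ne0$ and an arc $S_i\to R_j$ of sign $\mathrm{sign}(B_{ji})$ iff $B_{ji}\ne0$; a pair of antiparallel arcs of the same sign is regarded as a single undirected edge. An edge arising from $A_{ij}\ne0$ (R-to-S or undirected) has label $|A_{ij}|$; an edge with only S-to-R orientation has label $\infty$. A cycle is a nonempty closed walk (traversing edges consistently with orientation) repeating no vertex except first$=$last. A cycle $(e_1,\dots,e_{2r})$ is an s-cycle if all labels are finite and $\prod_{i=1}^r l(e_{2i-1})=\prod_{i=1}^r l(e_{2i})$. $G_{A,B}$ is steady if all of its cycles are s-cycles. *)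

theory Defs
  imports "HOL-Analysis.Analysis"
begin

text \<open>Matrices: an n x m real matrix is a value of type real^'m^'n
  (rows indexed by 'n, columns by 'm).\<close>

definition qual_class :: "real^'m^'n \<Rightarrow> (real^'m^'n) set" where
  "qual_class M' = {M. \<forall>i j. sgn (M $ i $ j) = sgn (M' $ i $ j)}"

definition principal_minor :: "real^'n^'n \<Rightarrow> 'n set \<Rightarrow> real" where
  "principal_minor M S =
     (\<Sum>p\<in>{p. p permutes S}. of_int (sign p) * (\<Prod>i\<in>S. M $ i $ p i))"

definition P0_matrix :: "real^'n^'n \<Rightarrow> bool" where
  "P0_matrix M \<longleftrightarrow> (\<forall>S. principal_minor M S \<ge> 0)"

datatype ('n, 'm) dsr_vertex = SV 'n | RV 'm

text \<open>Edges of the DSR graph: an undirected edge between S_i and R_j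
  (antiparallel arcs of the same sign), an arc R_j -> S_i, or an arc S_i -> R_j.\<close>
datatype ('n, 'm) dsr_edge = Undir 'n 'm | ArcRS 'm 'n | ArcSR 'n 'm

definition dsr_edges :: "real^'m^'n \<Rightarrow> real^'n^'m \<Rightarrow> ('n,'m) dsr_edge set" where
  "dsr_edges A B =
     {Undir i j | i j. A $ i $ j \<noteq> 0 \<and> B $ j $ i \<noteq> 0 \<and> sgn (A $ i $ j) = sgn (B $ j $ i)}
   \<union> {ArcRS j i | i j. A $ i $ j \<noteq> 0 \<and>
        \<not> (B $ j $ i \<noteq> 0 \<and> sgn (A $ i $ j) = sgn (B $ j $ i))}
   \<union> {ArcSR i j | i j. B $ j $ i \<noteq> 0 \<and>
        \<not> (A $ i $ j \<noteq> 0 \<and> sgn (A $ i $ j) = sgn (B $ j $ i))}"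

fun dsr_label :: "real^'m^'n \<Rightarrow> ('n,'m) dsr_edge \<Rightarrow> ereal" where
  "dsr_label A (Undir i j) = ereal \<bar>A $ i $ j\<bar>"
| "dsr_label A (ArcRS j i) = ereal \<bar>A $ i $ j\<bar>"
| "dsr_label A (ArcSR i j) = \<infinity>"

fun traverses :: "('n,'m) dsr_edge \<Rightarrow> ('n,'m) dsr_vertex \<Rightarrow> ('n,'m) dsr_vertex \<Rightarrow> bool" where
  "traverses (Undir i j) u v \<longleftrightarrow> (u = SV i \<and> v = RV j) \<or> (u = RV j \<and> v = SV i)"
| "traverses (ArcRS j i) u v \<longleftrightarrow> u = RV j \<and> v = SV i"
| "traverses (ArcSR i j) u v \<longleftrightarrow> u = SV i \<and> v = RV j"

definition dsr_cycle :: "real^'m^'n \<Rightarrow> real^'n^'m \<Rightarrow>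
    ('n,'m) dsr_edge list \<Rightarrow> ('n,'m) dsr_vertex list \<Rightarrow> bool" where
  "dsr_cycle A B es vs \<longleftrightarrow>
     es \<noteq> [] \<and> length vs = length es \<and> distinct vs \<and> distinct es \<and>
     set es \<subseteq> dsr_edges A B \<and>
     (\<forall>t < length es. traverses (es ! t) (vs ! t) (vs ! ((t + 1) mod length es)))"

text \<open>s-cycle: all labels finite and product of labels of e_1,e_3,... equals
  product of labels of e_2,e_4,... (0-based: even vs odd positions).\<close>
definition s_cycle :: "real^'m^'n \<Rightarrow> ('n,'m) dsr_edge list \<Rightarrow> bool" where
  "s_cycle A es \<longleftrightarrow>
     (\<forall>e \<in> set es. dsr_label A e \<noteq> \<infinity>) \<and>
     (\<Prod>t\<in>{t. t < length es \<and> even t}. real_of_ereal (dsr_label A (es ! t))) =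
     (\<Prod>t\<in>{t. t < length es \<and> odd t}. real_of_ereal (dsr_label A (es ! t)))"

definition dsr_steady :: "real^'m^'n \<Rightarrow> real^'n^'m \<Rightarrow> bool" where
  "dsr_steady A B \<longleftrightarrow> (\<forall>es vs. dsr_cycle A B es vs \<longrightarrow> s_cycle A es)"

end

theory Submission
  imports Defs "HOL-Combinatorics.Cycles"
begin

lemma cycle_prod:
  fixes M :: "real^'m^'n" and f g :: "'n \<Rightarrow> 'm" and p :: "'n \<Rightarrow> 'n"
  assumes st: "dsr_steady M (transpose M)"
   and p: "p permutes S" and fin: "finite S"
   and fg: "\<forall>i\<in>S. g (p i) = f i"
   and injf: "inj_on f S" and injg: "inj_on g S"
   and nzf: "\<forall>i\<in>S. M$i$(f i) \<noteq> 0" and nzg: "\<forall>i\<in>S. M$i$(g i) \<noteq> 0"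
   and aS: "a \<in> S" and pa: "p a \<noteq> a"
  shows "(\<Prod>k<least_power p a. \<bar>M$((p^^k) a)$(f ((p^^k) a))\<bar>)
       = (\<Prod>k<least_power p a. \<bar>M$((p^^k) a)$(g ((p^^k) a))\<bar>)"
proof -
  define r where "r = least_power p a"
  define x where "x k = (p^^k) a" for k
  have perm: "permutation p" using permutes_imp_permutation[OF fin p] .
  have r1: "r > 1" unfolding r_def using least_power_gt_one[OF perm pa] by simp
  have xS: "x k \<in> S" for k unfolding x_def
    using permutes_in_image[OF permutes_funpow[OF p, of k]] aS by simp
  have xsuc: "x (Suc k) = p (x k)" for k unfolding x_def by simp
  have xmod: "x k = x (k mod r)" for k
  proof -
    have "(p^^(r*(k div r))) a = a"
      using least_power_dvd[OF perm, of a "r*(k div r)"] unfolding r_def by simp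
    hence "x k = (p^^(k mod r)) ((p^^(r*(k div r))) a)"
      unfolding x_def by (metis add.commute funpow_add mod_mult_div_eq o_apply)
    thus ?thesis using \<open>(p^^(r*(k div r))) a = a\<close> x_def by simp
  qed
  have xr: "x r = x 0" using xmod[of r] by simp
  have xinj: "x i = x j \<Longrightarrow> i < r \<Longrightarrow> j < r \<Longrightarrow> i = j" for i j
  proof -
    have *: "i = j" if "x i = x j" "i \<le> j" "j < r" for i j
    proof -
      have "(p ^^ (j - i)) a = a"
        using funpow_diff[OF permutation_bijective[OF perm, THEN bij_is_inj] that(2)] that(1) x_def by simp
      hence "r dvd (j - i)" unfolding r_def using least_power_dvd[OF perm] by blast
      moreover have "j - i < r" using that by simp
      ultimately show ?thesis using that nat_dvd_not_less[of "j-i" r] by (cases "j - i = 0") auto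
    qed
    assume "x i = x j" "i < r" "j < r" thus "i = j" using *[of i j] *[of j i] by (cases "i \<le> j") auto
  qed
  have xfix: "p (x k) \<noteq> x k" for k
  proof
    assume h: "p (x k) = x k"
    define m where "m = k mod r"
    have mr: "m < r" using r1 unfolding m_def by simp
    have e: "x (Suc m) = x m" using h xsuc xmod m_def by metis
    show False
    proof (cases "Suc m < r")
      case True then show ?thesis using xinj[OF e True mr] by simp
    next
      case False
      hence "Suc m = r" using mr by simp
      hence "x 0 = x m" using e xr by simp
      hence "m = 0" using xinj mr r1 by simp
      thus ?thesis using \<open>Suc m = r\<close> r1 by simp
    qed
  qed
  define V where "V t = (if even t then SV (x (t div 2)) else RV (f (x (t div 2))))" for t :: nat
  define E where "E t = (if even t then Undir (x (t div 2)) (f (x (t div 2)))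
      else Undir (x (t div 2 + 1)) (g (x (t div 2 + 1))))" for t :: nat
  define es where "es = map E [0..<2*r]"
  define vs where "vs = map V [0..<2*r]"
  have les: "length es = 2*r" "length vs = 2*r" unfolding es_def vs_def by auto
  have pinj: "p u = p v \<Longrightarrow> u = v" for u v using permutes_inj[OF p] by (meson injD)
  have injV: "inj_on V {0..<2*r}"
  proof (rule inj_onI)
    fix a b assume a: "a \<in> {0..<2*r}" and b: "b \<in> {0..<2*r}" and e: "V a = V b"
    have ar: "a div 2 < r" "b div 2 < r" using a b by auto
    show "a = b"
    proof (cases "even a"; cases "even b")
      assume "even a" "even b"
      hence "x (a div 2) = x (b div 2)" using e V_def by simp
      hence "a div 2 = b div 2" using xinj ar by blast
      thus ?thesis using \<open>even a\<close> \<open>even b\<close> by (metis dvd_mult_div_cancel)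
    next
      assume "odd a" "odd b"
      hence "f (x (a div 2)) = f (x (b div 2))" using e V_def by simp
      hence "x (a div 2) = x (b div 2)" using injf xS by (meson inj_onD)
      hence "a div 2 = b div 2" using xinj ar by blast
      thus ?thesis using \<open>odd a\<close> \<open>odd b\<close> by (metis odd_two_times_div_two_succ)
    qed (use e V_def in auto)
  qed
  have injE: "inj_on E {0..<2*r}"
  proof (rule inj_onI)
    fix a b assume a: "a \<in> {0..<2*r}" and b: "b \<in> {0..<2*r}" and e: "E a = E b"
    have ar: "a div 2 < r" "b div 2 < r" using a b by auto
    have mixed: False if "even a'" "odd b'" "E a' = E b'" for a' b'
    proof -
      have 1: "x (a' div 2) = x (b' div 2 + 1)" and 2: "f (x (a' div 2)) = g (x (b' div 2 + 1))"
        using that E_def by auto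
      have "g (x (b' div 2 + 1)) = f (x (b' div 2))" using xsuc fg xS by simp
      hence "x (a' div 2) = x (b' div 2)" using 2 injf xS by (metis inj_onD)
      thus False using 1 xsuc xfix by simp
    qed
    show "a = b"
    proof (cases "even a"; cases "even b")
      assume "even a" "even b"
      hence "x (a div 2) = x (b div 2)" using e E_def by simp
      hence "a div 2 = b div 2" using xinj ar by blast
      thus ?thesis using \<open>even a\<close> \<open>even b\<close> by (metis dvd_mult_div_cancel)
    next
      assume "odd a" "odd b"
      hence "x (a div 2 + 1) = x (b div 2 + 1)" using e E_def by simp
      hence "x (a div 2) = x (b div 2)" using xsuc pinj by simp
      hence "a div 2 = b div 2" using xinj ar by blast
      thus ?thesis using \<open>odd a\<close> \<open>odd b\<close> by (metis odd_two_times_div_two_succ)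
    next
      assume "even a" "odd b" thus ?thesis using mixed e by blast
    next
      assume "odd a" "even b" thus ?thesis using mixed e by metis
    qed
  qed
  have edge: "Undir i j \<in> dsr_edges M (transpose M)" if "M$i$j \<noteq> 0" for i j
    using that unfolding dsr_edges_def transpose_def by auto
  have cyc: "dsr_cycle M (transpose M) es vs"
    unfolding dsr_cycle_def
  proof (intro conjI allI impI)
    show "es \<noteq> []" using les r1 by auto
    show "length vs = length es" using les by simp
    show "distinct vs" unfolding vs_def using injV by (simp add: distinct_map atLeast_upt)
    show "distinct es" unfolding es_def using injE by (simp add: distinct_map atLeast_upt)
    show "set es \<subseteq> dsr_edges M (transpose M)"
    proof
      fix e assume "e \<in> set es"
      then obtain t where "e = E t" unfolding es_def by auto
      thus "e \<in> dsr_edges M (transpose M)" unfolding E_def using edge nzf nzg xS by auto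
    qed
    fix t assume t: "t < length es"
    hence t2: "t < 2*r" using les by simp
    show "traverses (es ! t) (vs ! t) (vs ! ((t + 1) mod length es))"
    proof (cases "even t")
      case True
      hence "Suc t < 2*r" using t2 by presburger
      hence "(t + 1) mod length es = Suc t" using les by simp
      thus ?thesis using True t2 \<open>Suc t < 2*r\<close> unfolding es_def vs_def E_def V_def by simp
    next
      case False
      have gx: "g (x (t div 2 + 1)) = f (x (t div 2))" using xsuc fg xS by simp
      have vn: "vs ! ((t + 1) mod length es) = SV (x (t div 2 + 1))"
      proof (cases "Suc t < 2*r")
        case True
        hence "(t + 1) mod length es = Suc t" using les by simp
        thus ?thesis using True False unfolding vs_def V_def by simp
      next
        case c: False
        hence "Suc t = 2*r" using t2 by simp
        hence "(t + 1) mod length es = 0" "t div 2 + 1 = r" using les False by auto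
        thus ?thesis using xr r1 unfolding vs_def V_def by simp
      qed
      show ?thesis using vn False t2 gx unfolding es_def vs_def E_def V_def by simp
    qed
  qed
  hence sc: "s_cycle M es" using st unfolding dsr_steady_def by blast
  have ev: "{t. t < length es \<and> even t} = (\<lambda>k. 2*k) ` {..<r}"
    using les by (auto simp: image_iff elim!: evenE)
  have od: "{t. t < length es \<and> odd t} = (\<lambda>k. 2*k+1) ` {..<r}"
    using les by (auto simp: image_iff elim!: oddE)
  have "(\<Prod>t\<in>{t. t < length es \<and> even t}. real_of_ereal (dsr_label M (es ! t)))
      = (\<Prod>k<r. \<bar>M$(x k)$(f (x k))\<bar>)"
    unfolding ev by (subst prod.reindex) (auto simp: inj_on_def es_def E_def)
  moreover have "(\<Prod>t\<in>{t. t < length es \<and> odd t}. real_of_ereal (dsr_label M (es ! t)))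
      = (\<Prod>k<r. \<bar>M$(x (Suc k))$(g (x (Suc k)))\<bar>)"
    unfolding od by (subst prod.reindex) (auto simp: inj_on_def es_def E_def)
  ultimately have eq1: "(\<Prod>k<r. \<bar>M$(x k)$(f (x k))\<bar>) = (\<Prod>k<r. \<bar>M$(x (Suc k))$(g (x (Suc k)))\<bar>)"
    using sc unfolding s_cycle_def by simp
  define h where "h k = \<bar>M$(x k)$(g (x k))\<bar>" for k
  have "h 0 * (\<Prod>k<r. h (Suc k)) = (\<Prod>k<r. h k) * h r"
    using prod.lessThan_Suc_shift[of h r] prod.lessThan_Suc[of h r] by simp
  moreover have "h 0 \<noteq> 0" "h r = h 0" using nzg xS xr unfolding h_def by auto
  ultimately have "(\<Prod>k<r. h (Suc k)) = (\<Prod>k<r. h k)" by simp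
  thus ?thesis using eq1 unfolding h_def r_def x_def by simp
qed

lemma perm_between:
  assumes "inj_on f S" "inj_on g S" "f ` S = g ` S"
  shows "(\<lambda>k. if k \<in> S then inv_into S g (f k) else k) permutes S"
    and "\<And>i. i \<in> S \<Longrightarrow> g ((\<lambda>k. if k \<in> S then inv_into S g (f k) else k) i) = f i"
proof -
  have b1: "bij_betw f S (g ` S)" using assms by (simp add: bij_betw_def)
  have b2: "bij_betw (inv_into S g) (g ` S) S" using assms(2) by (simp add: bij_betw_inv_into inj_on_imp_bij_betw)
  have "bij_betw (inv_into S g \<circ> f) S S" using bij_betw_trans[OF b1 b2] .
  hence "bij_betw (\<lambda>k. if k \<in> S then inv_into S g (f k) else k) S S"
    by (rule bij_betw_cong[THEN iffD1, rotated]) auto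
  thus "(\<lambda>k. if k \<in> S then inv_into S g (f k) else k) permutes S"
    by (rule bij_imp_permutes) auto
  fix i assume "i \<in> S"
  thus "g ((\<lambda>k. if k \<in> S then inv_into S g (f k) else k) i) = f i"
    using assms(3) by (simp add: f_inv_into_f[where f=g] imageI[of i S f, simplified assms(3)])
qed

lemma steady_abs:
  fixes M :: "real^'m^'n" and f g :: "'n \<Rightarrow> 'm"
  assumes st: "dsr_steady M (transpose M)" and fin: "finite S"
    and injg: "inj_on g S" and nzg: "\<forall>i\<in>S. M$i$(g i) \<noteq> 0"
  shows "inj_on f S \<Longrightarrow> f ` S = g ` S \<Longrightarrow> \<forall>i\<in>S. M$i$(f i) \<noteq> 0 \<Longrightarrow>
    \<bar>\<Prod>i\<in>S. M$i$(f i)\<bar> = \<bar>\<Prod>i\<in>S. M$i$(g i)\<bar>"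
proof (induction "card {i\<in>S. f i \<noteq> g i}" arbitrary: f rule: less_induct)
  case (less f)
  show ?case
  proof (cases "\<exists>a\<in>S. f a \<noteq> g a")
    case False
    thus ?thesis by (metis (no_types, lifting) prod.cong)
  next
    case True
    then obtain a where aS: "a \<in> S" and fa: "f a \<noteq> g a" by blast
    define p where "p = (\<lambda>k. if k \<in> S then inv_into S g (f k) else k)"
    have p: "p permutes S" and fg: "\<forall>i\<in>S. g (p i) = f i"
      using perm_between[OF less.prems(1) injg less.prems(2)] unfolding p_def by auto
    have pa: "p a \<noteq> a" using fg aS fa by metis
    have perm: "permutation p" using permutes_imp_permutation[OF fin p] .
    define r where "r = least_power p a"
    define C where "C = (\<lambda>k. (p^^k) a) ` {..<r}"
    have cp: "(\<Prod>k<r. \<bar>M$((p^^k) a)$(f ((p^^k) a))\<bar>) = (\<Prod>k<r. \<bar>M$((p^^k) a)$(g ((p^^k) a))\<bar>)"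
      unfolding r_def by (rule cycle_prod[OF st p fin fg less.prems(1) injg less.prems(3) nzg aS pa])
    have injx: "inj_on (\<lambda>k. (p^^k) a) {..<r}"
      using cycle_of_permutation[OF perm, of a] unfolding r_def by (simp add: distinct_map atLeast_upt)
    have cC: "(\<Prod>i\<in>C. \<bar>M$i$(f i)\<bar>) = (\<Prod>i\<in>C. \<bar>M$i$(g i)\<bar>)"
      using cp unfolding C_def by (simp add: prod.reindex[OF injx])
    have CS: "C \<subseteq> S" unfolding C_def using permutes_in_image[OF permutes_funpow[OF p]] aS by auto
    have r0: "r > 0" unfolding r_def using least_power_of_permutation(2)[OF perm] .
    have aC: "a \<in> C" unfolding C_def using r0 by (auto intro!: image_eqI[of _ _ 0])
    have pCC: "p ` C \<subseteq> C"
    proof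
      fix y assume "y \<in> p ` C"
      then obtain k where k: "k < r" "y = p ((p^^k) a)" unfolding C_def by auto
      show "y \<in> C"
      proof (cases "Suc k < r")
        case True thus ?thesis using k unfolding C_def by (auto intro!: image_eqI[of _ _ "Suc k"])
      next
        case False hence "Suc k = r" using k by simp
        hence "y = a" using k least_power_of_permutation(1)[OF perm, of a] unfolding r_def
          by (metis funpow.simps(2) o_apply)
        thus ?thesis using aC by simp
      qed
    qed
    have pC: "p ` C = C" using endo_inj_surj[OF _ pCC] permutes_inj[OF p] finite_subset[OF CS fin]
      by (meson inj_on_subset subset_UNIV)
    have fgC: "f ` C = g ` C"
    proof -
      have "f ` C = g ` (p ` C)" using fg CS by (auto simp: image_image intro!: image_cong)
      thus ?thesis using pC by simp
    qed
    define h where "h k = (if k \<in> C then g k else f k)" for k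
    have injh: "inj_on h S"
    proof (rule inj_onI)
      fix i j assume i: "i \<in> S" and j: "j \<in> S" and e: "h i = h j"
      have cross: False if "i' \<in> C" "j' \<in> S" "j' \<notin> C" "g i' = f j'" for i' j'
      proof -
        have "g i' = g (p j')" using fg that by auto
        moreover have "p j' \<in> S" using p that by (simp add: permutes_in_image)
        ultimately have "i' = p j'" using injg that CS by (meson inj_onD subsetD)
        hence "p j' \<in> p ` C" using pC that by simp
        hence "j' \<in> C" using permutes_inj[OF p] by (simp add: inj_image_mem_iff)
        thus False using that by simp
      qed
      show "i = j"
      proof (cases "i \<in> C"; cases "j \<in> C")
        assume "i \<in> C" "j \<in> C" thus ?thesis using e injg i j h_def by (simp add: inj_on_def)
      next
        assume "i \<notin> C" "j \<notin> C" thus ?thesis using e less.prems(1) i j h_def by (simp add: inj_on_def)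
      next
        assume "i \<in> C" "j \<notin> C" thus ?thesis using e cross[of i j] j h_def by simp
      next
        assume "i \<notin> C" "j \<in> C" thus ?thesis using e cross[of j i] i h_def by simp
      qed
    qed
    have himg: "h ` S = g ` S"
    proof -
      have "h ` S = h ` C \<union> h ` (S - C)" using CS by blast
      also have "\<dots> = g ` C \<union> f ` (S - C)" unfolding h_def by auto
      also have "\<dots> = f ` S" using fgC CS by blast
      finally show ?thesis using less.prems(2) by simp
    qed
    have nzh: "\<forall>i\<in>S. M$i$(h i) \<noteq> 0" using less.prems(3) nzg h_def by auto
    have hf: "\<bar>\<Prod>i\<in>S. M$i$(f i)\<bar> = \<bar>\<Prod>i\<in>S. M$i$(h i)\<bar>"
    proof -
      have "\<bar>\<Prod>i\<in>S. M$i$(f i)\<bar> = (\<Prod>i\<in>S. \<bar>M$i$(f i)\<bar>)" by (rule abs_prod)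
      also have "\<dots> = (\<Prod>i\<in>S - C. \<bar>M$i$(f i)\<bar>) * (\<Prod>i\<in>C. \<bar>M$i$(f i)\<bar>)"
        by (rule prod.subset_diff[OF CS fin])
      also have "\<dots> = (\<Prod>i\<in>S - C. \<bar>M$i$(h i)\<bar>) * (\<Prod>i\<in>C. \<bar>M$i$(h i)\<bar>)"
        using cC unfolding h_def by simp
      also have "\<dots> = (\<Prod>i\<in>S. \<bar>M$i$(h i)\<bar>)" by (rule prod.subset_diff[OF CS fin, symmetric])
      also have "\<dots> = \<bar>\<Prod>i\<in>S. M$i$(h i)\<bar>" by (rule abs_prod[symmetric])
      finally show ?thesis .
    qed
    have "{i\<in>S. h i \<noteq> g i} \<subset> {i\<in>S. f i \<noteq> g i}"
      using aS fa aC unfolding h_def by auto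
    hence "card {i\<in>S. h i \<noteq> g i} < card {i\<in>S. f i \<noteq> g i}"
      by (rule psubset_card_mono[rotated]) (use fin in auto)
    from less.hyps[OF this injh himg nzh] hf show ?thesis by simp
  qed
qed

definition PP :: "real^'m^'n \<Rightarrow> 'n set \<Rightarrow> ('n \<Rightarrow> 'm) \<Rightarrow> real" where
  "PP X S f = (\<Prod>i\<in>S. X$i$(f i))"
definition GG :: "'n set \<Rightarrow> ('n \<Rightarrow> 'm) set" where
  "GG S = {f \<in> PiE S (\<lambda>_. UNIV). inj_on f S}"
definition rep :: "'n set \<Rightarrow> ('n \<Rightarrow> 'm) \<Rightarrow> ('n \<Rightarrow> 'm)" where
  "rep S f = (SOME h. h \<in> GG S \<and> h ` S = f ` S)"
definition rho :: "'n set \<Rightarrow> ('n \<Rightarrow> 'm) \<Rightarrow> 'n \<Rightarrow> 'n" where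
  "rho S f = (\<lambda>k. if k \<in> S then inv_into S (rep S f) (f k) else k)"
definition eps :: "'n set \<Rightarrow> ('n \<Rightarrow> 'm) \<Rightarrow> real" where
  "eps S f = of_int (sign (rho S f))"

lemma expand:
  fixes X :: "real^'m::finite^'n::finite" and Y :: "real^'m^'n"
  shows "principal_minor (X ** transpose Y) S =
    (\<Sum>f\<in>PiE S (\<lambda>_. UNIV). PP X S f * (\<Sum>p\<in>{p. p permutes S}. of_int (sign p) * (\<Prod>i\<in>S. Y$(p i)$(f i))))"
proof -
  have fin: "finite S" by simp
  have "principal_minor (X ** transpose Y) S =
     (\<Sum>p\<in>{p. p permutes S}. of_int (sign p) * (\<Prod>i\<in>S. \<Sum>j\<in>UNIV. X$i$j * Y$(p i)$j))"
    unfolding principal_minor_def by (simp add: matrix_matrix_mult_def transpose_def)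
  also have "\<dots> = (\<Sum>p\<in>{p. p permutes S}. of_int (sign p) *
      (\<Sum>f\<in>PiE S (\<lambda>_. UNIV). \<Prod>i\<in>S. X$i$(f i) * Y$(p i)$(f i)))"
    by (simp add: prod_sum_PiE[OF fin])
  also have "\<dots> = (\<Sum>p\<in>{p. p permutes S}. \<Sum>f\<in>PiE S (\<lambda>_. UNIV).
      PP X S f * (of_int (sign p) * (\<Prod>i\<in>S. Y$(p i)$(f i))))"
    by (simp add: sum_distrib_left prod.distrib PP_def algebra_simps)
  also have "\<dots> = (\<Sum>f\<in>PiE S (\<lambda>_. UNIV). \<Sum>p\<in>{p. p permutes S}.
      PP X S f * (of_int (sign p) * (\<Prod>i\<in>S. Y$(p i)$(f i))))"
    by (rule sum.swap)
  finally show ?thesis by (simp add: sum_distrib_left)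
qed

lemma zero_noninj:
  fixes Y :: "real^'m::finite^'n::finite"
  assumes "\<not> inj_on f S"
  shows "(\<Sum>p\<in>{p. p permutes S}. of_int (sign p) * (\<Prod>i\<in>S. Y$(p i)$(f i))) = 0"
proof -
  obtain i j where ij: "i \<in> S" "j \<in> S" "i \<noteq> j" "f i = f j" using assms unfolding inj_on_def by blast
  define t where "t = Transposition.transpose i j"
  have t: "t permutes S" unfolding t_def using ij by (simp add: permutes_swap_id)
  have ft: "f (t k) = f k" for k unfolding t_def using ij by (auto simp: Transposition.transpose_def)
  have st: "sign t = -1" unfolding t_def using ij by (simp add: sign_swap_id)
  define T where "T p = of_int (sign p) * (\<Prod>i\<in>S. Y$(p i)$(f i))" for p
  have T: "T (p \<circ> t) = - T p" if p: "p permutes S" for p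
  proof -
    have "(\<Prod>k\<in>S. Y$(p (t k))$(f k)) = (\<Prod>k\<in>S. Y$(p (t k))$(f (t k)))" using ft by simp
    also have "\<dots> = (\<Prod>k\<in>S. Y$(p k)$(f k))"
      using prod.permute[OF t, of "\<lambda>k. Y$(p k)$(f k)"] by (simp add: o_def)
    finally have "(\<Prod>k\<in>S. Y$(p (t k))$(f k)) = (\<Prod>k\<in>S. Y$(p k)$(f k))" .
    moreover have "sign (p \<circ> t) = sign p * sign t"
      using sign_compose permutes_imp_permutation p t finite by blast
    ultimately show ?thesis unfolding T_def using st by simp
  qed
  have "sum T {p. p permutes S} = sum (\<lambda>p. T (p \<circ> t)) {p. p permutes S}"
    by (rule sum.reindex_bij_witness[where i="\<lambda>p. p \<circ> t" and j="\<lambda>p. p \<circ> t"])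
       (auto simp: o_assoc[symmetric] t_def intro: permutes_compose[OF t[unfolded t_def]])
  also have "\<dots> = - sum T {p. p permutes S}" using T by (simp add: sum_negf)
  finally show ?thesis unfolding T_def by simp
qed

lemma rep_prop: assumes "f \<in> GG S" shows "rep S f \<in> GG S \<and> rep S f ` S = f ` S"
  unfolding rep_def by (rule someI[of _ f]) (use assms in simp)

lemma rho_perm: assumes "f \<in> GG S" shows "rho S f permutes S"
proof -
  have "inj_on f S" "inj_on (rep S f) S" "f ` S = rep S f ` S"
    using assms rep_prop[OF assms] unfolding GG_def by auto
  from perm_between(1)[OF this] show ?thesis unfolding rho_def .
qed

lemma comp_GG: assumes "f \<in> GG S" "q permutes S"
  shows "f \<circ> q \<in> GG S" "(f \<circ> q) ` S = f ` S"
proof -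
  show im: "(f \<circ> q) ` S = f ` S" using permutes_image[OF assms(2)] by (metis image_comp)
  have "inj_on (f \<circ> q) S"
    using assms permutes_image[OF assms(2)] unfolding GG_def
    by (metis (mono_tags, lifting) comp_inj_on mem_Collect_eq permutes_inj_on)
  moreover have "f \<circ> q \<in> PiE S (\<lambda>_. UNIV)"
    using assms unfolding GG_def by (auto simp: PiE_def extensional_def permutes_not_in)
  ultimately show "f \<circ> q \<in> GG S" unfolding GG_def by simp
qed

lemma eps_comp: fixes f :: "'n::finite \<Rightarrow> 'm" assumes "f \<in> GG S" "q permutes S"
  shows "eps S f * eps S (f \<circ> q) = of_int (sign q)"
proof -
  have r: "rep S (f \<circ> q) = rep S f" unfolding rep_def using comp_GG(2)[OF assms] by simp
  have "rho S (f \<circ> q) = rho S f \<circ> q"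
  proof
    fix k show "rho S (f \<circ> q) k = (rho S f \<circ> q) k"
      unfolding rho_def r using assms(2) by (auto simp: permutes_in_image permutes_not_in)
  qed
  moreover have "sign (rho S f \<circ> q) = sign (rho S f) * sign q"
    using sign_compose permutes_imp_permutation rho_perm[OF assms(1)] assms(2) finite by blast
  ultimately have "sign (rho S (f \<circ> q)) = sign (rho S f) * sign q" by simp
  hence "eps S (f \<circ> q) = eps S f * of_int (sign q)" unfolding eps_def by simp
  moreover have "eps S f * eps S f = 1" unfolding eps_def by (metis of_int_1 of_int_mult sign_idempotent)
  ultimately show ?thesis by (metis mult.assoc mult_1)
qed

lemma inj_term:
  fixes Y :: "real^'m::finite^'n::finite"
  assumes f: "f \<in> GG S"
  shows "(\<Sum>p\<in>{p. p permutes S}. of_int (sign p) * (\<Prod>i\<in>S. Y$(p i)$(f i)))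
    = (\<Sum>g\<in>{g\<in>GG S. g ` S = f ` S}. eps S f * eps S g * PP Y S g)"
proof -
  have injf: "inj_on f S" using f unfolding GG_def by simp
  have 1: "(\<Prod>i\<in>S. Y$(p i)$(f i)) = PP Y S (f \<circ> inv p)" if p: "p permutes S" for p
    unfolding PP_def using prod.permute[OF p, of "\<lambda>k. Y$k$((f \<circ> inv p) k)"]
    by (simp add: o_def permutes_inverses(2)[OF p])
  have "(\<Sum>p\<in>{p. p permutes S}. of_int (sign p) * (\<Prod>i\<in>S. Y$(p i)$(f i)))
      = (\<Sum>p\<in>{p. p permutes S}. of_int (sign (inv p)) * PP Y S (f \<circ> inv p))"
    using 1 by (intro sum.cong) (auto simp: sign_inverse permutes_imp_permutation)
  also have "\<dots> = (\<Sum>q\<in>{p. p permutes S}. of_int (sign q) * PP Y S (f \<circ> q))"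
    by (rule sum.reindex_bij_witness[where i=inv and j=inv])
       (auto simp: permutes_inv permutes_inv_inv)
  also have "\<dots> = (\<Sum>q\<in>{p. p permutes S}. eps S f * eps S (f \<circ> q) * PP Y S (f \<circ> q))"
    using eps_comp[OF f] by simp
  also have "\<dots> = (\<Sum>g\<in>{g\<in>GG S. g ` S = f ` S}. eps S f * eps S g * PP Y S g)"
  proof (rule sum.reindex_bij_witness[where i="\<lambda>g k. if k \<in> S then inv_into S f (g k) else k"
        and j="\<lambda>q. f \<circ> q"])
    fix q assume q: "q \<in> {p. p permutes S}"
    show "(\<lambda>k. if k \<in> S then inv_into S f ((f \<circ> q) k) else k) = q"
    proof
      fix k show "(if k \<in> S then inv_into S f ((f \<circ> q) k) else k) = q k"
        using q injf by (auto simp: permutes_in_image permutes_not_in inv_into_f_f)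
    qed
    show "f \<circ> q \<in> {g \<in> GG S. g ` S = f ` S}" using comp_GG[OF f] q by simp
  next
    fix g assume g: "g \<in> {g \<in> GG S. g ` S = f ` S}"
    have injg: "inj_on g S" using g unfolding GG_def by simp
    note pb = perm_between[OF injg injf, simplified g[simplified]]
    show "(\<lambda>k. if k \<in> S then inv_into S f (g k) else k) \<in> {p. p permutes S}" using pb(1) g by simp
    show "f \<circ> (\<lambda>k. if k \<in> S then inv_into S f (g k) else k) = g"
    proof
      fix k show "(f \<circ> (\<lambda>k. if k \<in> S then inv_into S f (g k) else k)) k = g k"
        using pb(2)[of k] f g unfolding GG_def by (auto simp: PiE_def extensional_def)
    qed
  qed simp
  finally show ?thesis .
qed

definition DD :: "real^'m^'n \<Rightarrow> 'n set \<Rightarrow> 'm set \<Rightarrow> real" where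
  "DD X S T = (\<Sum>f\<in>{f\<in>GG S. f ` S = T}. eps S f * PP X S f)"

lemma finite_GG: "finite (GG (S :: 'n::finite set) :: ('n \<Rightarrow> 'm::finite) set)"
proof -
  have "finite (PiE S (\<lambda>_. UNIV :: 'm set))" by (rule finite_PiE) auto
  thus ?thesis unfolding GG_def by simp
qed

lemma pm_formula:
  fixes X Y :: "real^'m::finite^'n::finite"
  shows "principal_minor (X ** transpose Y) S = (\<Sum>T\<in>(\<lambda>f. f ` S) ` GG S. DD X S T * DD Y S T)"
proof -
  define Q where "Q f = (\<Sum>p\<in>{p. p permutes S}. of_int (sign p) * (\<Prod>i\<in>S. Y$(p i)$(f i)))" for f
  have finP: "finite (PiE S (\<lambda>_. UNIV :: 'm set))" by (rule finite_PiE) auto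
  have "principal_minor (X ** transpose Y) S = (\<Sum>f\<in>PiE S (\<lambda>_. UNIV). PP X S f * Q f)"
    unfolding Q_def by (rule expand)
  also have "\<dots> = (\<Sum>f\<in>GG S. PP X S f * Q f)"
    by (rule sum.mono_neutral_right[OF finP]) (auto simp: GG_def Q_def zero_noninj)
  also have "\<dots> = (\<Sum>f\<in>GG S. \<Sum>g\<in>{g\<in>GG S. g ` S = f ` S}. (eps S f * PP X S f) * (eps S g * PP Y S g))"
    unfolding Q_def by (intro sum.cong refl) (simp add: inj_term sum_distrib_left algebra_simps)
  also have "\<dots> = (\<Sum>T\<in>(\<lambda>f. f ` S) ` GG S. \<Sum>f\<in>{f\<in>GG S. f ` S = T}.
      \<Sum>g\<in>{g\<in>GG S. g ` S = f ` S}. (eps S f * PP X S f) * (eps S g * PP Y S g))"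
    by (rule sum.image_gen[OF finite_GG])
  also have "\<dots> = (\<Sum>T\<in>(\<lambda>f. f ` S) ` GG S. \<Sum>f\<in>{f\<in>GG S. f ` S = T}.
      (eps S f * PP X S f) * DD Y S T)"
    unfolding DD_def by (intro sum.cong refl) (simp add: sum_distrib_left)
  also have "\<dots> = (\<Sum>T\<in>(\<lambda>f. f ` S) ` GG S. DD X S T * DD Y S T)"
    unfolding DD_def by (simp add: sum_distrib_right)
  finally show ?thesis .
qed

lemma sgn_prod_real: "finite S \<Longrightarrow> sgn (\<Prod>i\<in>S. h i :: real) = (\<Prod>i\<in>S. sgn (h i))"
  by (induction S rule: finite_induct) (auto simp: sgn_mult)

lemma PP_sgn0:
  fixes X M' :: "real^'m::finite^'n::finite"
  assumes "X \<in> qual_class M'"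
  shows "sgn (PP X S f) = (\<Prod>i\<in>S. sgn (M'$i$(f i)))"
proof -
  have e: "sgn (X$i$j) = sgn (M'$i$j)" for i j using assms unfolding qual_class_def by simp
  have "sgn (PP X S f) = (\<Prod>i\<in>S. sgn (X$i$(f i)))"
    unfolding PP_def by (rule sgn_prod_real) simp
  also have "\<dots> = (\<Prod>i\<in>S. sgn (M'$i$(f i)))" using e by simp
  finally show ?thesis .
qed

lemma PP_sgn:
  fixes X M' :: "real^'m::finite^'n::finite"
  assumes "X \<in> qual_class M'"
  shows "PP X S f = (\<Prod>i\<in>S. sgn (M'$i$(f i))) * \<bar>PP X S f\<bar>"
proof -
  have "PP X S f = sgn (PP X S f) * \<bar>PP X S f\<bar>" by (simp add: sgn_mult_abs)
  thus ?thesis unfolding PP_sgn0[OF assms] .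
qed

lemma DD_form:
  fixes X M' :: "real^'m::finite^'n::finite"
  assumes X: "X \<in> qual_class M'" and st: "dsr_steady X (transpose X)"
    and h: "h \<in> GG S" "h ` S = T" "(\<Prod>i\<in>S. sgn (M'$i$(h i))) \<noteq> 0"
  shows "DD X S T = \<bar>PP X S h\<bar> * (\<Sum>f\<in>{f\<in>GG S. f ` S = T}. eps S f * (\<Prod>i\<in>S. sgn (M'$i$(f i))))"
proof -
  have fin: "finite S" by simp
  have Xh: "PP X S h \<noteq> 0" using PP_sgn0[OF X, of S h] h(3) by (metis sgn_zero)
  hence nzh: "\<forall>i\<in>S. X$i$(h i) \<noteq> 0" unfolding PP_def using fin by (simp add: prod_zero_iff)
  have injh: "inj_on h S" using h unfolding GG_def by simp
  have key: "PP X S f = (\<Prod>i\<in>S. sgn (M'$i$(f i))) * \<bar>PP X S h\<bar>" if f: "f \<in> GG S" "f ` S = T" for f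
  proof (cases "(\<Prod>i\<in>S. sgn (M'$i$(f i))) = 0")
    case True
    have "PP X S f = 0" using PP_sgn[OF X, of S f] True by (metis mult_zero_left)
    thus ?thesis using True by simp
  next
    case False
    hence Xf: "PP X S f \<noteq> 0" using PP_sgn0[OF X, of S f] by (metis sgn_zero)
    hence nzf: "\<forall>i\<in>S. X$i$(f i) \<noteq> 0" unfolding PP_def using fin by (simp add: prod_zero_iff)
    have "f ` S = h ` S" using f h by simp
    have "\<bar>PP X S f\<bar> = \<bar>PP X S h\<bar>" unfolding PP_def
      by (rule steady_abs[OF st fin injh nzh _ \<open>f ` S = h ` S\<close> nzf]) (use f in \<open>simp add: GG_def\<close>)
    thus ?thesis using PP_sgn[OF X, of S f] by metis
  qed
  have "DD X S T = (\<Sum>f\<in>{f\<in>GG S. f ` S = T}. eps S f * ((\<Prod>i\<in>S. sgn (M'$i$(f i))) * \<bar>PP X S h\<bar>))"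
    unfolding DD_def using key by (intro sum.cong refl) simp
  also have "\<dots> = \<bar>PP X S h\<bar> * (\<Sum>f\<in>{f\<in>GG S. f ` S = T}. eps S f * (\<Prod>i\<in>S. sgn (M'$i$(f i))))"
    unfolding sum_distrib_left by (intro sum.cong refl) (simp only: ac_simps)
  finally show ?thesis .
qed

lemma DD_zero:
  fixes X M' :: "real^'m::finite^'n::finite"
  assumes X: "X \<in> qual_class M'"
    and h: "\<forall>h\<in>GG S. h ` S = T \<longrightarrow> (\<Prod>i\<in>S. sgn (M'$i$(h i))) = 0"
  shows "DD X S T = 0"
  unfolding DD_def
proof (intro sum.neutral ballI)
  fix f assume "f \<in> {f \<in> GG S. f ` S = T}"
  hence "(\<Prod>i\<in>S. sgn (M'$i$(f i))) = 0" using h by blast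
  hence "PP X S f = 0" using PP_sgn[OF X, of S f] by (metis mult_zero_left)
  thus "eps S f * PP X S f = 0" by simp
qed

lemma DD_nonneg:
  fixes X Y M' :: "real^'m::finite^'n::finite"
  assumes X: "X \<in> qual_class M'" "dsr_steady X (transpose X)"
    and Y: "Y \<in> qual_class M'" "dsr_steady Y (transpose Y)"
  shows "DD X S T * DD Y S T \<ge> 0"
proof (cases "\<exists>h\<in>GG S. h ` S = T \<and> (\<Prod>i\<in>S. sgn (M'$i$(h i))) \<noteq> 0")
  case True
  then obtain h where h: "h \<in> GG S" "h ` S = T" "(\<Prod>i\<in>S. sgn (M'$i$(h i))) \<noteq> 0" by blast
  define K where "K = (\<Sum>f\<in>{f\<in>GG S. f ` S = T}. eps S f * (\<Prod>i\<in>S. sgn (M'$i$(f i))))"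
  have "DD X S T * DD Y S T = (\<bar>PP X S h\<bar> * \<bar>PP Y S h\<bar>) * (K * K)"
    unfolding DD_form[OF X h] DD_form[OF Y h] K_def[symmetric] by (simp only: ac_simps)
  also have "\<dots> \<ge> 0" by simp
  finally show ?thesis .
next
  case False
  hence "DD X S T = 0" using DD_zero[OF X(1)] by blast
  thus ?thesis by simp
qed

lemma pm_nonneg:
  fixes X Y M' :: "real^'m::finite^'n::finite"
  assumes X: "X \<in> qual_class M'" "dsr_steady X (transpose X)"
    and Y: "Y \<in> qual_class M'" "dsr_steady Y (transpose Y)"
  shows "principal_minor (X ** transpose Y) S \<ge> 0"
  unfolding pm_formula by (rule sum_nonneg) (rule DD_nonneg[OF X Y])

lemma cont_pm1: "continuous_on UNIV (\<lambda>X. principal_minor (X ** transpose (Y::real^'m::finite^'n::finite)) S)"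
  unfolding principal_minor_def matrix_matrix_mult_def transpose_def
  by (simp, intro continuous_intros)

lemma cont_pm2: "continuous_on UNIV (\<lambda>Y. principal_minor ((X::real^'m::finite^'n::finite) ** transpose Y) S)"
  unfolding principal_minor_def matrix_matrix_mult_def transpose_def
  by (simp, intro continuous_intros)

lemma closure_nonneg:
  fixes \<phi> :: "'a::topological_space \<Rightarrow> real"
  assumes "continuous_on UNIV \<phi>" "\<forall>x\<in>A. \<phi> x \<ge> 0" "x \<in> closure A"
  shows "\<phi> x \<ge> 0"
proof -
  have "closed {x. 0 \<le> \<phi> x}" using assms(1) by (intro closed_Collect_le continuous_intros) auto
  hence "closure A \<subseteq> {x. 0 \<le> \<phi> x}" using assms(2) by (intro closure_minimal) auto
  thus ?thesis using assms(3) by auto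
qed

theorem lemma2p8:
  fixes M' :: "real^'m^'n" and \<M> :: "(real^'m^'n) set"
    and A :: "real^'m^'n" and B :: "real^'n^'m"
  assumes "\<M> \<subseteq> qual_class M'"
    and "\<forall>M\<in>\<M>. dsr_steady M (transpose M)"
    and "A \<in> closure \<M>"
    and "transpose B \<in> closure \<M>"
  shows "P0_matrix (A ** B)"
  unfolding P0_matrix_def
proof
  fix S
  have 1: "\<forall>X\<in>\<M>. \<forall>Y\<in>\<M>. principal_minor (X ** transpose Y) S \<ge> 0"
    using assms(1,2) pm_nonneg by blast
  have 2: "\<forall>Y\<in>\<M>. \<forall>X\<in>closure \<M>. principal_minor (X ** transpose Y) S \<ge> 0"
  proof (intro ballI)
    fix Y X assume "Y \<in> \<M>" "X \<in> closure \<M>"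
    thus "principal_minor (X ** transpose Y) S \<ge> 0"
      using closure_nonneg[OF cont_pm1[of Y S], of \<M> X] 1 by blast
  qed
  have "principal_minor (A ** transpose (transpose B)) S \<ge> 0"
    using closure_nonneg[OF cont_pm2[of A S], of \<M> "transpose B"] 2 assms(3,4) by blast
  thus "principal_minor (A ** B) S \<ge> 0" by (simp add: transpose_transpose)
qed

end
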